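(* For every $k\ge0$ there are constants $c,c'>0$ such that the following holds. For every $n\ge2k$ and every weighted $k$-uniform hypergraph $w$ on $[n]$, $$cn^{-k}\|w\|_1 \le \sum_{i=0}^k W_i\le c'n^{-k}\|w\|_1,$$ where $(W_0,\ldots,W_k)$ is the $W$-vector of $w$.
   Context: $[n]=\{1,\dots,n\}$; $V^{(k)}$ is the family of $k$-subsets of $V$; a weighted $k$-uniform hypergraph on $V$ is a function $w:V^{(k)}\to\mathbb{R}$; $w(S)=\sum_{e\in S^{(k)}}w(e)$; $\|w\|_1=\sum_e|w(e)|$. $W$-vector (defined recursively on $k$): for $w$ on an $n$-set $V$, $W_0=|w(V)|/\binom nk$ (for $k=0$, $w$ is a single real number and $W_0=|w|$). For $k\ge1$ and distinct $x,y\in V$, $w^{xy}:(V\setminus\{x,y\})^{(k-1)}\to\mathbb{R}$ is $w^{xy}(e)=w(e\cup\{x\})-w(e\cup\{y\})$; with $(W^{xy}_0,\ldots,W^{xy}_{k-1})$ its $W$-vector, $W_i=\frac{1}{n(n-1)}\sum_{(x,y):\,x\ne y}W^{xy}_{i-1}$ for $1\le i\le k$ (average over ordered pairs of distinct vertices). *)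

theory Defs
  imports Complex_Main
begin

definition ksubsets :: "nat \<Rightarrow> 'a set \<Rightarrow> 'a set set" where
  "ksubsets k V = {e. e \<subseteq> V \<and> card e = k}"

definition hsum :: "nat \<Rightarrow> ('a set \<Rightarrow> real) \<Rightarrow> 'a set \<Rightarrow> real" where
  "hsum k w S = (\<Sum>e\<in>ksubsets k S. w e)"

definition hnorm1 :: "nat \<Rightarrow> ('a set \<Rightarrow> real) \<Rightarrow> 'a set \<Rightarrow> real" where
  "hnorm1 k w V = (\<Sum>e\<in>ksubsets k V. \<bar>w e\<bar>)"

definition wdiff :: "('a set \<Rightarrow> real) \<Rightarrow> 'a \<Rightarrow> 'a \<Rightarrow> 'a set \<Rightarrow> real" where
  "wdiff w x y e = w (insert x e) - w (insert y e)"

text \<open>Wvec i k V w is the entry W_i of the W-vector of the weighted k-uniform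
  hypergraph w on the vertex set V (meaningful for i \<le> k; set to 0 for i > k).\<close>
primrec Wvec :: "nat \<Rightarrow> nat \<Rightarrow> 'a set \<Rightarrow> ('a set \<Rightarrow> real) \<Rightarrow> real" where
  "Wvec 0 k V w = \<bar>hsum k w V\<bar> / real (card V choose k)"
| "Wvec (Suc i) k V w =
     (if Suc i \<le> k then
        (\<Sum>x\<in>V. \<Sum>y\<in>V - {x}. Wvec i (k - 1) (V - {x, y}) (wdiff w x y))
          / (real (card V) * (real (card V) - 1))
      else 0)"

end

theory Submission
  imports Defs
begin


lemma ks_fin[simp]: "finite V \<Longrightarrow> finite (ksubsets k V)"
  unfolding ksubsets_def by (rule finite_subset[of _ "Pow V"]) auto

lemma ks_mem: "e \<in> ksubsets k V \<longleftrightarrow> e \<subseteq> V \<and> card e = k"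
  by (simp add: ksubsets_def)

lemma swap0:
  assumes "finite V"
  shows "(\<Sum>x\<in>V. \<Sum>e\<in>ksubsets m (V - {x}). h x e) = (\<Sum>e\<in>ksubsets m V. \<Sum>x\<in>V - e. h x e)"
proof -
  have "(\<Sum>x\<in>V. \<Sum>e\<in>ksubsets m (V - {x}). h x e) = (\<Sum>x\<in>V. \<Sum>e\<in>{e. e \<in> ksubsets m V \<and> x \<notin> e}. h x e)"
    by (rule sum.cong[OF refl], rule sum.cong) (auto simp: ksubsets_def)
  also have "\<dots> = (\<Sum>e\<in>ksubsets m V. \<Sum>x\<in>{x. x \<in> V \<and> x \<notin> e}. h x e)"
    by (rule sum.swap_restrict) (use assms in auto)
  also have "\<dots> = (\<Sum>e\<in>ksubsets m V. \<Sum>x\<in>V - e. h x e)"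
    by (rule sum.cong[OF refl], rule sum.cong) auto
  finally show ?thesis .
qed

lemma swap3:
  assumes "finite V"
  shows "(\<Sum>x\<in>V. \<Sum>y\<in>V - {x}. \<Sum>e\<in>ksubsets m (V - {x, y}). h x y e)
       = (\<Sum>e\<in>ksubsets m V. \<Sum>x\<in>V - e. \<Sum>y\<in>V - e - {x}. h x y e)"
proof -
  have "(\<Sum>y\<in>V - {x}. \<Sum>e\<in>ksubsets m (V - {x, y}). h x y e)
     = (\<Sum>e\<in>ksubsets m (V - {x}). \<Sum>y\<in>V - e - {x}. h x y e)" for x
  proof -
    have "(\<Sum>y\<in>V - {x}. \<Sum>e\<in>ksubsets m (V - {x, y}). h x y e)
      = (\<Sum>y\<in>V - {x}. \<Sum>e\<in>ksubsets m (V - {x} - {y}). h x y e)"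
      by (rule sum.cong[OF refl]) (simp add: insert_commute Diff_insert2[symmetric])
    also have "\<dots> = (\<Sum>e\<in>ksubsets m (V - {x}). \<Sum>y\<in>V - {x} - e. h x y e)"
      by (rule swap0) (use assms in auto)
    also have "\<dots> = (\<Sum>e\<in>ksubsets m (V - {x}). \<Sum>y\<in>V - e - {x}. h x y e)"
      by (rule sum.cong[OF refl]) (metis Diff_insert Diff_insert2)
    finally show ?thesis .
  qed
  then have "(\<Sum>x\<in>V. \<Sum>y\<in>V - {x}. \<Sum>e\<in>ksubsets m (V - {x, y}). h x y e)
     = (\<Sum>x\<in>V. \<Sum>e\<in>ksubsets m (V - {x}). \<Sum>y\<in>V - e - {x}. h x y e)" by simp
  also have "\<dots> = (\<Sum>e\<in>ksubsets m V. \<Sum>x\<in>V - e. \<Sum>y\<in>V - e - {x}. h x y e)"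
    by (rule swap0[OF assms])
  finally show ?thesis .
qed

lemma link1:
  assumes "finite V"
  shows "(\<Sum>e\<in>ksubsets m V. \<Sum>x\<in>V - e. g (insert x e)) = real (Suc m) * (\<Sum>f\<in>ksubsets (Suc m) V. g f)"
proof -
  have "(\<Sum>e\<in>ksubsets m V. \<Sum>x\<in>V - e. g (insert x e)) = (\<Sum>x\<in>V. \<Sum>e\<in>ksubsets m (V - {x}). g (insert x e))"
    using swap0[OF assms, where m=m and h="\<lambda>x e. g (insert x e)"] by simp
  also have "\<dots> = (\<Sum>x\<in>V. \<Sum>f\<in>{f. f \<in> ksubsets (Suc m) V \<and> x \<in> f}. g f)"
  proof (rule sum.cong[OF refl])
    fix x assume x: "x \<in> V"
    show "(\<Sum>e\<in>ksubsets m (V - {x}). g (insert x e)) = (\<Sum>f\<in>{f. f \<in> ksubsets (Suc m) V \<and> x \<in> f}. g f)"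
    proof (rule sum.reindex_bij_witness[where i = "\<lambda>f. f - {x}" and j = "insert x"])
      fix e assume "e \<in> ksubsets m (V - {x})"
      then show "insert x e - {x} = e" by (auto simp: ksubsets_def)
    next
      fix e assume "e \<in> ksubsets m (V - {x})"
      then show "insert x e \<in> {f. f \<in> ksubsets (Suc m) V \<and> x \<in> f}"
        using x assms by (auto simp: ksubsets_def finite_subset card_insert_if)
    next
      fix f assume "f \<in> {f. f \<in> ksubsets (Suc m) V \<and> x \<in> f}"
      then show "insert x (f - {x}) = f" by auto
    next
      fix f assume "f \<in> {f. f \<in> ksubsets (Suc m) V \<and> x \<in> f}"
      then show "f - {x} \<in> ksubsets m (V - {x})"
        by (auto simp: ksubsets_def)
    next
      fix e assume "e \<in> ksubsets m (V - {x})"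
      then show "g (insert x e) = g (insert x e)" by simp
    qed
  qed
  also have "\<dots> = (\<Sum>f\<in>ksubsets (Suc m) V. \<Sum>x\<in>{x. x \<in> V \<and> x \<in> f}. g f)"
    by (rule sum.swap_restrict) (use assms in auto)
  also have "\<dots> = (\<Sum>f\<in>ksubsets (Suc m) V. real (Suc m) * g f)"
  proof (rule sum.cong[OF refl])
    fix f assume "f \<in> ksubsets (Suc m) V"
    then have "{x. x \<in> V \<and> x \<in> f} = f" "card f = Suc m" by (auto simp: ksubsets_def)
    then show "(\<Sum>x\<in>{x. x \<in> V \<and> x \<in> f}. g f) = real (Suc m) * g f" by simp
  qed
  finally show ?thesis by (simp add: sum_distrib_left)
qed

lemma hnorm1_nonneg: "hnorm1 k w V \<ge> 0"
  unfolding hnorm1_def by (rule sum_nonneg) simp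

lemma ks0: "finite V \<Longrightarrow> ksubsets 0 V = {{}}"
  by (auto simp: ksubsets_def dest: finite_subset)

lemma stepA:
  fixes w :: "'a set \<Rightarrow> real"
  assumes fin: "finite V" and cV: "card V = n" and mn: "m \<le> n"
  defines "u \<equiv> \<lambda>e. (\<Sum>x\<in>V - e. w (insert x e))"
  shows "real (n - m) * real (Suc m) * hnorm1 (Suc m) w V
     \<le> real (n - m) * hnorm1 m u V + (\<Sum>x\<in>V. \<Sum>y\<in>V - {x}. hnorm1 m (wdiff w x y) (V - {x, y}))"
proof -
  have pt: "real (n - m) * \<bar>w (insert x e)\<bar> \<le> \<bar>u e\<bar> + (\<Sum>y\<in>V - e - {x}. \<bar>wdiff w x y e\<bar>)"
    if e: "e \<in> ksubsets m V" and x: "x \<in> V - e" for e x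
  proof -
    have eV: "e \<subseteq> V" "card e = m" using e by (auto simp: ksubsets_def)
    have fe: "finite e" using eV fin finite_subset by blast
    have cd: "card (V - e) = n - m" using eV cV fin by (simp add: card_Diff_subset fe)
    have "real (n - m) * w (insert x e) = (\<Sum>y\<in>V - e. w (insert x e))"
      using cd by simp
    also have "\<dots> = u e + (\<Sum>y\<in>V - e. wdiff w x y e)"
      by (simp add: u_def wdiff_def sum_subtractf)
    finally have eq: "real (n - m) * w (insert x e) = u e + (\<Sum>y\<in>V - e. wdiff w x y e)" .
    have "(\<Sum>y\<in>V - e. \<bar>wdiff w x y e\<bar>) = \<bar>wdiff w x x e\<bar> + (\<Sum>y\<in>V - e - {x}. \<bar>wdiff w x y e\<bar>)"
      by (rule sum.remove) (use fin x in auto)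
    then have eq2: "(\<Sum>y\<in>V - e. \<bar>wdiff w x y e\<bar>) = (\<Sum>y\<in>V - e - {x}. \<bar>wdiff w x y e\<bar>)"
      by (simp add: wdiff_def)
    have "real (n - m) * \<bar>w (insert x e)\<bar> = \<bar>u e + (\<Sum>y\<in>V - e. wdiff w x y e)\<bar>"
      using eq by (metis abs_mult abs_of_nat)
    also have "\<dots> \<le> \<bar>u e\<bar> + \<bar>\<Sum>y\<in>V - e. wdiff w x y e\<bar>" by (rule abs_triangle_ineq)
    also have "\<dots> \<le> \<bar>u e\<bar> + (\<Sum>y\<in>V - e. \<bar>wdiff w x y e\<bar>)" by (simp add: sum_abs)
    finally show ?thesis using eq2 by simp
  qed
  have "real (n - m) * real (Suc m) * hnorm1 (Suc m) w V
      = real (n - m) * (\<Sum>e\<in>ksubsets m V. \<Sum>x\<in>V - e. \<bar>w (insert x e)\<bar>)"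
    using link1[OF fin, where m=m and g="\<lambda>f. \<bar>w f\<bar>"] by (simp add: hnorm1_def)
  also have "\<dots> = (\<Sum>e\<in>ksubsets m V. \<Sum>x\<in>V - e. real (n - m) * \<bar>w (insert x e)\<bar>)"
    by (simp add: sum_distrib_left)
  also have "\<dots> \<le> (\<Sum>e\<in>ksubsets m V. \<Sum>x\<in>V - e. \<bar>u e\<bar> + (\<Sum>y\<in>V - e - {x}. \<bar>wdiff w x y e\<bar>))"
    by (intro sum_mono pt) auto
  also have "\<dots> = (\<Sum>e\<in>ksubsets m V. real (n - m) * \<bar>u e\<bar>)
       + (\<Sum>e\<in>ksubsets m V. \<Sum>x\<in>V - e. \<Sum>y\<in>V - e - {x}. \<bar>wdiff w x y e\<bar>)"
  proof -
    have "(\<Sum>x\<in>V - e. \<bar>u e\<bar>) = real (n - m) * \<bar>u e\<bar>" if "e \<in> ksubsets m V" for e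
    proof -
      have eV: "e \<subseteq> V" "card e = m" using that by (auto simp: ksubsets_def)
      have fe: "finite e" using eV fin finite_subset by blast
      have "card (V - e) = n - m" using eV cV fin by (simp add: card_Diff_subset fe)
      then show ?thesis by simp
    qed
    then have "(\<Sum>e\<in>ksubsets m V. \<Sum>x\<in>V - e. \<bar>u e\<bar>) = (\<Sum>e\<in>ksubsets m V. real (n - m) * \<bar>u e\<bar>)"
      by (rule sum.cong[OF refl])
    then show ?thesis by (simp only: sum.distrib)
  qed
  also have "\<dots> = real (n - m) * hnorm1 m u V + (\<Sum>x\<in>V. \<Sum>y\<in>V - {x}. hnorm1 m (wdiff w x y) (V - {x, y}))"
    using swap3[OF fin, where h="\<lambda>x y e. \<bar>wdiff w x y e\<bar>" and m=m]
    by (simp add: hnorm1_def sum_distrib_left)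
  finally show ?thesis .
qed

lemma stepB:
  assumes fin: "finite V"
  shows "hsum m (\<lambda>e. \<Sum>x\<in>V - e. w (insert x e)) V = real (Suc m) * hsum (Suc m) w V"
  unfolding hsum_def using link1[OF fin, where m=m and g=w] by simp

lemma stepC:
  fixes w :: "'a set \<Rightarrow> real"
  assumes fin: "finite V" and x: "x \<in> V" and y: "y \<in> V - {x}"
  defines "u \<equiv> \<lambda>e. (\<Sum>x\<in>V - e. w (insert x e))"
  shows "real m * hnorm1 (m - 1) (wdiff u x y) (V - {x, y})
     \<le> real m * real m * hnorm1 m (wdiff w x y) (V - {x, y})"
proof (cases m)
  case 0 then show ?thesis by simp
next
  case (Suc j)
  define W where "W = V - {x, y}"
  have finW: "finite W" using fin W_def by simp
  have key: "wdiff u x y e = (\<Sum>z\<in>W - e. wdiff w x y (insert z e))" if e: "e \<in> ksubsets j W" for e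
  proof -
    have eW: "e \<subseteq> W" using e by (simp add: ksubsets_def)
    have xe: "x \<notin> e" "y \<notin> e" using eW W_def by auto
    have s1: "V - insert x e = insert y (W - e)" using eW x y W_def by auto
    have s2: "V - insert y e = insert x (W - e)" using eW x y W_def by auto
    have yn: "y \<notin> W - e" "x \<notin> W - e" using W_def by auto
    have finWe: "finite (W - e)" using finW by simp
    have "u (insert x e) = w (insert y (insert x e)) + (\<Sum>z\<in>W - e. w (insert z (insert x e)))"
      unfolding u_def s1 using yn finWe by simp
    moreover have "u (insert y e) = w (insert x (insert y e)) + (\<Sum>z\<in>W - e. w (insert z (insert y e)))"
      unfolding u_def s2 using yn finWe by simp
    ultimately show ?thesis
      by (simp add: wdiff_def sum_subtractf insert_commute)
  qed
  have "hnorm1 j (wdiff u x y) W \<le> (\<Sum>e\<in>ksubsets j W. \<Sum>z\<in>W - e. \<bar>wdiff w x y (insert z e)\<bar>)"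
    unfolding hnorm1_def
    by (rule sum_mono) (simp add: key sum_abs)
  also have "\<dots> = real m * hnorm1 m (wdiff w x y) W"
    using link1[OF finW, where m=j and g="\<lambda>f. \<bar>wdiff w x y f\<bar>"] Suc by (simp add: hnorm1_def)
  finally have "hnorm1 (m - 1) (wdiff u x y) W \<le> real m * hnorm1 m (wdiff w x y) W" using Suc by simp
  then show ?thesis unfolding W_def
    by (metis mult.assoc mult_left_mono of_nat_0_le_iff)
qed

lemma poinc:
  fixes w :: "'a set \<Rightarrow> real"
  assumes fin: "finite V" and cV: "card V = n" and kn: "2 * k \<le> n"
  shows "real n * hnorm1 k w V \<le> real n * \<bar>hsum k w V\<bar>
     + 2 * real k * (\<Sum>x\<in>V. \<Sum>y\<in>V - {x}. hnorm1 (k - 1) (wdiff w x y) (V - {x, y}))"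
  using kn
proof (induction k arbitrary: w)
  case 0
  then show ?case using fin by (simp add: hnorm1_def hsum_def ks0)
next
  case (Suc m)
  define u where "u = (\<lambda>e. (\<Sum>x\<in>V - e. w (insert x e)))"
  define T where "T = (\<Sum>x\<in>V. \<Sum>y\<in>V - {x}. hnorm1 m (wdiff w x y) (V - {x, y}))"
  define H where "H = hsum (Suc m) w V"
  have mn: "m \<le> n" "2 * m \<le> n" using Suc.prems by auto
  have T0: "T \<ge> 0" unfolding T_def by (intro sum_nonneg hnorm1_nonneg)
  have A: "real (n - m) * real (Suc m) * hnorm1 (Suc m) w V \<le> real (n - m) * hnorm1 m u V + T"
    using stepA[OF fin cV mn(1), of w] unfolding u_def T_def by simp
  have IH: "real n * hnorm1 m u V \<le> real n * \<bar>hsum m u V\<bar>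
     + 2 * real m * (\<Sum>x\<in>V. \<Sum>y\<in>V - {x}. hnorm1 (m - 1) (wdiff u x y) (V - {x, y}))"
    using Suc.IH[OF mn(2)] .
  have B: "hsum m u V = real (Suc m) * H" unfolding u_def H_def by (rule stepB[OF fin])
  have "(\<Sum>x\<in>V. \<Sum>y\<in>V - {x}. real m * hnorm1 (m - 1) (wdiff u x y) (V - {x, y}))
      \<le> (\<Sum>x\<in>V. \<Sum>y\<in>V - {x}. real m * real m * hnorm1 m (wdiff w x y) (V - {x, y}))"
    by (intro sum_mono) (unfold u_def, rule stepC[OF fin], auto)
  then have C: "real m * (\<Sum>x\<in>V. \<Sum>y\<in>V - {x}. hnorm1 (m - 1) (wdiff u x y) (V - {x, y}))
      \<le> real m * real m * T"
    unfolding T_def by (simp add: sum_distrib_left)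
  have U: "real n * hnorm1 m u V \<le> real n * real (Suc m) * \<bar>H\<bar> + 2 * (real m * real m * T)"
    using IH B C by (simp add: abs_mult)
  define a where "a = real (n - m)"
  define b where "b = real (Suc m)"
  have a0: "a > 0" using Suc.prems unfolding a_def by simp
  have b0: "b > 0" unfolding b_def by simp
  have nle: "real n \<le> a * (4 * real m + 2)"
  proof -
    have "real n \<le> 2 * a" using Suc.prems unfolding a_def by (simp add: of_nat_diff)
    also have "\<dots> \<le> a * (4 * real m + 2)" using a0 by simp
    finally show ?thesis .
  qed
  let ?W = "hnorm1 (Suc m) w V"
  have "a * b * (real n * ?W) = real n * (a * b * ?W)" by (simp add: algebra_simps)
  also have "\<dots> \<le> real n * (a * hnorm1 m u V + T)"
    using A unfolding a_def b_def by (intro mult_left_mono) auto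
  also have "\<dots> = a * (real n * hnorm1 m u V) + real n * T" by (simp add: algebra_simps)
  also have "\<dots> \<le> a * (real n * b * \<bar>H\<bar> + 2 * (real m * real m * T)) + a * (4 * real m + 2) * T"
    using U a0 nle T0 unfolding b_def
    by (intro add_mono mult_left_mono mult_right_mono) auto
  also have "\<dots> = a * b * (real n * \<bar>H\<bar> + 2 * b * T)"
    unfolding b_def by (simp add: algebra_simps)
  finally have "a * b * (real n * ?W) \<le> a * b * (real n * \<bar>H\<bar> + 2 * b * T)" .
  then have "real n * ?W \<le> real n * \<bar>H\<bar> + 2 * b * T"
    using a0 b0 by (simp add: mult_le_cancel_left_pos)
  then show ?case unfolding H_def T_def b_def by simp
qed

lemma Wvec_nonneg: "Wvec i k V w \<ge> 0"
proof (induction i arbitrary: k V w)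
  case 0 then show ?case by simp
next
  case (Suc i)
  have d: "real (card V) * (real (card V) - 1) \<ge> 0"
    by (cases "card V") auto
  show ?case using Suc.IH d by (auto intro!: divide_nonneg_nonneg sum_nonneg)
qed

lemma Wsum_Suc:
  "(\<Sum>i=0..Suc m. Wvec i (Suc m) V w) = Wvec 0 (Suc m) V w
    + (\<Sum>x\<in>V. \<Sum>y\<in>V - {x}. \<Sum>i=0..m. Wvec i m (V - {x, y}) (wdiff w x y))
       / (real (card V) * (real (card V) - 1))"
proof -
  have "(\<Sum>i=0..Suc m. Wvec i (Suc m) V w) = Wvec 0 (Suc m) V w + (\<Sum>i=0..m. Wvec (Suc i) (Suc m) V w)"
    by (simp only: sum.atLeast0_atMost_Suc_shift o_def)
  also have "(\<Sum>i=0..m. Wvec (Suc i) (Suc m) V w) = (\<Sum>i=0..m. (\<Sum>x\<in>V. \<Sum>y\<in>V - {x}. Wvec i m (V - {x, y}) (wdiff w x y))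
       / (real (card V) * (real (card V) - 1)))"
    by (rule sum.cong) auto
  also have "\<dots> = (\<Sum>i=0..m. \<Sum>x\<in>V. \<Sum>y\<in>V - {x}. Wvec i m (V - {x, y}) (wdiff w x y))
       / (real (card V) * (real (card V) - 1))"
    by (simp add: sum_divide_distrib)
  also have "(\<Sum>i=0..m. \<Sum>x\<in>V. \<Sum>y\<in>V - {x}. Wvec i m (V - {x, y}) (wdiff w x y))
     = (\<Sum>x\<in>V. \<Sum>y\<in>V - {x}. \<Sum>i=0..m. Wvec i m (V - {x, y}) (wdiff w x y))"
    by (subst sum.swap) (simp add: sum.swap[of _ "{0..m}"])
  finally show ?thesis .
qed

lemma boundD:
  fixes w :: "'a set \<Rightarrow> real"
  assumes fin: "finite V" and cV: "card V = n"
  shows "(\<Sum>x\<in>V. \<Sum>y\<in>V - {x}. hnorm1 m (wdiff w x y) (V - {x, y}))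
     \<le> 2 * real n * real (Suc m) * hnorm1 (Suc m) w V"
proof -
  have inner: "(\<Sum>x\<in>V - e. \<Sum>y\<in>V - e - {x}. \<bar>wdiff w x y e\<bar>)
       \<le> 2 * real n * (\<Sum>x\<in>V - e. \<bar>w (insert x e)\<bar>)" for e
  proof -
    let ?a = "\<lambda>z. \<bar>w (insert z e)\<bar>"
    have "(\<Sum>x\<in>V - e. \<Sum>y\<in>V - e - {x}. \<bar>wdiff w x y e\<bar>)
       \<le> (\<Sum>x\<in>V - e. \<Sum>y\<in>V - e. ?a x + ?a y)"
    proof (rule sum_mono)
      fix x assume "x \<in> V - e"
      have "(\<Sum>y\<in>V - e - {x}. \<bar>wdiff w x y e\<bar>) \<le> (\<Sum>y\<in>V - e - {x}. ?a x + ?a y)"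
        by (rule sum_mono) (simp add: wdiff_def abs_triangle_ineq4)
      also have "\<dots> \<le> (\<Sum>y\<in>V - e. ?a x + ?a y)"
        by (rule sum_mono2) (use fin in auto)
      finally show "(\<Sum>y\<in>V - e - {x}. \<bar>wdiff w x y e\<bar>) \<le> (\<Sum>y\<in>V - e. ?a x + ?a y)" .
    qed
    also have "\<dots> = 2 * real (card (V - e)) * (\<Sum>x\<in>V - e. ?a x)"
      by (simp add: sum.distrib sum.swap[of "\<lambda>x y. ?a y"] sum_distrib_left algebra_simps)
    also have "\<dots> \<le> 2 * real n * (\<Sum>x\<in>V - e. ?a x)"
    proof -
      have "card (V - e) \<le> n" using cV fin by (metis card_mono Diff_subset)
      then show ?thesis by (intro mult_right_mono sum_nonneg) auto
    qed
    finally show ?thesis .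
  qed
  have "(\<Sum>x\<in>V. \<Sum>y\<in>V - {x}. hnorm1 m (wdiff w x y) (V - {x, y}))
      = (\<Sum>e\<in>ksubsets m V. \<Sum>x\<in>V - e. \<Sum>y\<in>V - e - {x}. \<bar>wdiff w x y e\<bar>)"
    using swap3[OF fin, where h="\<lambda>x y e. \<bar>wdiff w x y e\<bar>" and m=m] by (simp add: hnorm1_def)
  also have "\<dots> \<le> (\<Sum>e\<in>ksubsets m V. 2 * real n * (\<Sum>x\<in>V - e. \<bar>w (insert x e)\<bar>))"
    by (rule sum_mono) (rule inner)
  also have "\<dots> = 2 * real n * real (Suc m) * hnorm1 (Suc m) w V"
    using link1[OF fin, where m=m and g="\<lambda>f. \<bar>w f\<bar>"] by (simp add: hnorm1_def sum_distrib_left[symmetric])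
  finally show ?thesis .
qed

primrec Cl :: "nat \<Rightarrow> real" where
  "Cl 0 = 1"
| "Cl (Suc m) = 2 * real (Suc m) * Cl m + 1"

lemma Cl_ge1: "Cl k \<ge> 1"
  by (induction k) auto

lemma card_minus2:
  assumes "finite V" "x \<in> V" "y \<in> V - {x}"
  shows "card (V - {x, y}) = card V - 2"
proof -
  have "card (V - {x, y}) = card V - card {x, y}"
    using assms by (intro card_Diff_subset) auto
  then show ?thesis using assms by auto
qed

lemma LB:
  fixes w :: "'a set \<Rightarrow> real"
  assumes "finite V" "card V = n" "2 * k \<le> n"
  shows "hnorm1 k w V \<le> Cl k * real n ^ k * (\<Sum>i=0..k. Wvec i k V w)"
  using assms
proof (induction k arbitrary: V n w)
  case 0
  then show ?case by (simp add: hnorm1_def hsum_def ks0)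
next
  case (Suc m)
  note fin = Suc.prems(1) and cV = Suc.prems(2)
  have n2: "n \<ge> 2" using Suc.prems by simp
  define N where "N = real n * (real n - 1)"
  have N0: "N > 0" unfolding N_def using n2 by simp
  define Sm where "Sm = (\<lambda>x y. \<Sum>i=0..m. Wvec i m (V - {x, y}) (wdiff w x y))"
  define A where "A = (\<Sum>x\<in>V. \<Sum>y\<in>V - {x}. Sm x y) / N"
  define W0 where "W0 = Wvec 0 (Suc m) V w"
  define T where "T = (\<Sum>x\<in>V. \<Sum>y\<in>V - {x}. hnorm1 m (wdiff w x y) (V - {x, y}))"
  define H where "H = hsum (Suc m) w V"
  have S: "(\<Sum>i=0..Suc m. Wvec i (Suc m) V w) = W0 + A"
    unfolding W0_def A_def Sm_def N_def using Wsum_Suc[of m V w] cV by simp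
  have A0: "A \<ge> 0" unfolding A_def Sm_def using N0
    by (intro divide_nonneg_pos sum_nonneg Wvec_nonneg) auto
  have W00: "W0 \<ge> 0" unfolding W0_def by (rule Wvec_nonneg)
  have P: "real n * hnorm1 (Suc m) w V \<le> real n * \<bar>H\<bar> + 2 * real (Suc m) * T"
    using poinc[OF fin cV Suc.prems(3), of w] unfolding H_def T_def by simp
  have IH: "hnorm1 m (wdiff w x y) (V - {x, y}) \<le> Cl m * real (n - 2) ^ m * Sm x y"
    if "x \<in> V" "y \<in> V - {x}" for x y
    unfolding Sm_def
    by (rule Suc.IH) (use fin card_minus2[OF fin that] cV Suc.prems(3) in auto)
  have "T \<le> (\<Sum>x\<in>V. \<Sum>y\<in>V - {x}. Cl m * real (n - 2) ^ m * Sm x y)"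
    unfolding T_def by (intro sum_mono IH) auto
  also have "\<dots> = Cl m * real (n - 2) ^ m * (N * A)"
  proof -
    have "N * A = (\<Sum>x\<in>V. \<Sum>y\<in>V - {x}. Sm x y)" unfolding A_def using N0 by simp
    then show ?thesis by (simp add: sum_distrib_left)
  qed
  finally have T1: "T \<le> Cl m * real (n - 2) ^ m * (N * A)" .
  have pw: "real (n - 2) ^ m * N \<le> real n ^ Suc m * real n"
  proof -
    have "real (n - 2) ^ m \<le> real n ^ m" by (intro power_mono) auto
    moreover have "N \<le> real n * real n" unfolding N_def by (simp add: algebra_simps)
    ultimately have "real (n - 2) ^ m * N \<le> real n ^ m * (real n * real n)"
      using N0 by (intro mult_mono) auto
    then show ?thesis by (simp add: algebra_simps)
  qed
  have Cb: "Cl (Suc m) * real (Suc m) \<ge> 0" using Cl_ge1[of "Suc m"] by simp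
  have Hb: "\<bar>H\<bar> \<le> real n ^ Suc m * W0"
  proof -
    have cpos: "real (n choose Suc m) > 0" using Suc.prems by simp
    have "\<bar>H\<bar> = real (n choose Suc m) * W0" unfolding W0_def H_def using cV cpos by simp
    also have "\<dots> \<le> real n ^ Suc m * W0"
    proof -
      have "n choose Suc m \<le> n ^ Suc m" using binomial_le_pow[of "Suc m" n] Suc.prems by simp
      then have "real (n choose Suc m) \<le> real n ^ Suc m" by (metis of_nat_le_iff of_nat_power)
      then show ?thesis using W00 by (intro mult_right_mono)
    qed
    finally show ?thesis .
  qed
  have "real n * hnorm1 (Suc m) w V \<le> real n * (real n ^ Suc m * W0) + 2 * real (Suc m) * (Cl m * (real (n - 2) ^ m * N) * A)"
    using P Hb T1 n2 by (intro order.trans[OF P] add_mono mult_left_mono) (auto simp: algebra_simps)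
  also have "\<dots> \<le> real n * (real n ^ Suc m * W0) + 2 * real (Suc m) * (Cl m * (real n ^ Suc m * real n) * A)"
    using pw A0 Cl_ge1[of m] by (intro add_mono mult_left_mono mult_right_mono) auto
  also have "\<dots> = real n * (real n ^ Suc m * (W0 + 2 * real (Suc m) * Cl m * A))"
    by (simp add: algebra_simps)
  also have "\<dots> \<le> real n * (Cl (Suc m) * real n ^ Suc m * (W0 + A))"
  proof -
    have "W0 + 2 * real (Suc m) * Cl m * A \<le> Cl (Suc m) * (W0 + A)"
      using W00 A0 Cl_ge1[of m] Cl_ge1[of "Suc m"]
      by (simp add: algebra_simps mult_left_mono)
    then have "real n ^ Suc m * (W0 + 2 * real (Suc m) * Cl m * A) \<le> real n ^ Suc m * (Cl (Suc m) * (W0 + A))"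
      by (rule mult_left_mono) simp
    then have "real n * (real n ^ Suc m * (W0 + 2 * real (Suc m) * Cl m * A)) \<le> real n * (real n ^ Suc m * (Cl (Suc m) * (W0 + A)))"
      by (rule mult_left_mono) simp
    then show ?thesis by (simp only: mult_ac)
  qed
  finally have "real n * hnorm1 (Suc m) w V \<le> real n * (Cl (Suc m) * real n ^ Suc m * (W0 + A))" .
  then show ?case using n2 S by simp
qed

primrec Du :: "nat \<Rightarrow> real" where
  "Du 0 = 1"
| "Du (Suc m) = real (Suc m) ^ Suc m + 2 ^ (m + 2) * real (Suc m) * Du m"

lemma Du_ge1: "Du k \<ge> 1"
proof (induction k)
  case 0 then show ?case by simp
next
  case (Suc m)
  have "real (Suc m) ^ Suc m \<ge> 1" by (rule one_le_power) simp
  moreover have "2 ^ (m + 2) * real (Suc m) * Du m \<ge> 0" using Suc by simp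
  ultimately show ?case unfolding Du.simps by linarith
qed

lemma UB:
  fixes w :: "'a set \<Rightarrow> real"
  assumes "finite V" "card V = n" "2 * k \<le> n"
  shows "real n ^ k * (\<Sum>i=0..k. Wvec i k V w) \<le> Du k * hnorm1 k w V"
  using assms
proof (induction k arbitrary: V n w)
  case 0
  then show ?case by (simp add: hnorm1_def hsum_def ks0)
next
  case (Suc m)
  note fin = Suc.prems(1) and cV = Suc.prems(2)
  have n2: "n \<ge> 2" using Suc.prems by simp
  define N where "N = real n * (real n - 1)"
  have N0: "N > 0" unfolding N_def using n2 by simp
  define Sm where "Sm = (\<lambda>x y. \<Sum>i=0..m. Wvec i m (V - {x, y}) (wdiff w x y))"
  define A where "A = (\<Sum>x\<in>V. \<Sum>y\<in>V - {x}. Sm x y) / N"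
  define W0 where "W0 = Wvec 0 (Suc m) V w"
  define T where "T = (\<Sum>x\<in>V. \<Sum>y\<in>V - {x}. hnorm1 m (wdiff w x y) (V - {x, y}))"
  define H where "H = hsum (Suc m) w V"
  define Wn where "Wn = hnorm1 (Suc m) w V"
  have Wn0: "Wn \<ge> 0" unfolding Wn_def by (rule hnorm1_nonneg)
  have S: "(\<Sum>i=0..Suc m. Wvec i (Suc m) V w) = W0 + A"
    unfolding W0_def A_def Sm_def N_def using Wsum_Suc[of m V w] cV by simp
  have Sm0: "Sm x y \<ge> 0" for x y unfolding Sm_def by (intro sum_nonneg Wvec_nonneg)
  have IH: "real (n - 2) ^ m * Sm x y \<le> Du m * hnorm1 m (wdiff w x y) (V - {x, y})"
    if "x \<in> V" "y \<in> V - {x}" for x y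
    unfolding Sm_def
    by (rule Suc.IH) (use fin card_minus2[OF fin that] cV Suc.prems(3) in auto)
  have nm: "real n ^ m \<le> 2 ^ m * real (n - 2) ^ m"
  proof (cases m)
    case 0 then show ?thesis by simp
  next
    case (Suc j)
    then have "n \<ge> 4" using Suc.prems by simp
    then have "real n \<le> 2 * real (n - 2)" by (simp add: of_nat_diff)
    then have "real n ^ m \<le> (2 * real (n - 2)) ^ m" by (intro power_mono) auto
    then show ?thesis by (simp add: power_mult_distrib)
  qed
  have per: "real n ^ m * Sm x y \<le> 2 ^ m * (Du m * hnorm1 m (wdiff w x y) (V - {x, y}))"
    if "x \<in> V" "y \<in> V - {x}" for x y
  proof -
    have "real n ^ m * Sm x y \<le> 2 ^ m * real (n - 2) ^ m * Sm x y"
      using nm Sm0 by (intro mult_right_mono) auto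
    also have "\<dots> = 2 ^ m * (real (n - 2) ^ m * Sm x y)" by simp
    also have "\<dots> \<le> 2 ^ m * (Du m * hnorm1 m (wdiff w x y) (V - {x, y}))"
      using IH[OF that] by (intro mult_left_mono) auto
    finally show ?thesis .
  qed
  have "real n ^ m * (\<Sum>x\<in>V. \<Sum>y\<in>V - {x}. Sm x y)
      = (\<Sum>x\<in>V. \<Sum>y\<in>V - {x}. real n ^ m * Sm x y)" by (simp add: sum_distrib_left)
  also have "\<dots> \<le> (\<Sum>x\<in>V. \<Sum>y\<in>V - {x}. 2 ^ m * (Du m * hnorm1 m (wdiff w x y) (V - {x, y})))"
    by (intro sum_mono per) auto
  also have "\<dots> = 2 ^ m * Du m * T" unfolding T_def by (simp add: sum_distrib_left mult.assoc)
  also have "\<dots> \<le> 2 ^ m * Du m * (2 * real n * real (Suc m) * Wn)"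
    unfolding T_def Wn_def using boundD[OF fin cV, of m w] Du_ge1[of m]
    by (intro mult_left_mono) auto
  finally have X: "real n ^ m * (\<Sum>x\<in>V. \<Sum>y\<in>V - {x}. Sm x y) \<le> real n * (2 ^ (m + 1) * Du m * real (Suc m) * Wn)"
    by (simp add: algebra_simps)
  define Y where "Y = 2 ^ (m + 1) * Du m * real (Suc m) * Wn"
  have Y0: "Y \<ge> 0" unfolding Y_def using Du_ge1[of m] Wn0 by simp
  have n1: "real n - 1 > 0" using n2 by simp
  have "real n ^ Suc m * A = real n ^ m * (\<Sum>x\<in>V. \<Sum>y\<in>V - {x}. Sm x y) / (real n - 1)"
    unfolding A_def N_def using n2 by (simp add: field_simps)
  also have "\<dots> \<le> real n * Y / (real n - 1)"
    using X n1 unfolding Y_def by (intro divide_right_mono) auto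
  also have "\<dots> \<le> 2 * Y"
  proof -
    have "real n * Y \<le> 2 * Y * (real n - 1)"
    proof -
      have "0 \<le> Y * (real n - 2)" using Y0 n2 by simp
      then show ?thesis by (simp add: algebra_simps)
    qed
    then show ?thesis using n1 by (simp add: divide_le_eq)
  qed
  finally have Apart: "real n ^ Suc m * A \<le> 2 ^ (m + 2) * real (Suc m) * Du m * Wn"
    unfolding Y_def by (simp add: algebra_simps)
  have Wpart: "real n ^ Suc m * W0 \<le> real (Suc m) ^ Suc m * Wn"
  proof -
    have cpos: "real (n choose Suc m) > 0" using Suc.prems by simp
    have "(real n / real (Suc m)) ^ Suc m \<le> real (n choose Suc m)"
      using binomial_ge_n_over_k_pow_k[of "Suc m" n] Suc.prems by simp
    then have nb: "real n ^ Suc m \<le> real (Suc m) ^ Suc m * real (n choose Suc m)"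
      by (simp add: power_divide divide_le_eq mult.commute)
    have Hb: "\<bar>H\<bar> \<le> Wn" unfolding H_def Wn_def hsum_def hnorm1_def by (rule sum_abs)
    have "real n ^ Suc m * W0 = real n ^ Suc m * \<bar>H\<bar> / real (n choose Suc m)"
      unfolding W0_def H_def using cV by simp
    also have "\<dots> \<le> real (Suc m) ^ Suc m * real (n choose Suc m) * Wn / real (n choose Suc m)"
      using nb Hb cpos by (intro divide_right_mono mult_mono) auto
    also have "\<dots> = real (Suc m) ^ Suc m * Wn" using cpos by simp
    finally show ?thesis .
  qed
  have "real n ^ Suc m * (W0 + A) \<le> real (Suc m) ^ Suc m * Wn + 2 ^ (m + 2) * real (Suc m) * Du m * Wn"
    using Wpart Apart by (simp add: algebra_simps)
  also have "\<dots> = Du (Suc m) * Wn" by (simp add: algebra_simps)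
  finally show ?case using S unfolding Wn_def by simp
qed


theorem lemma3p2:
  shows "\<forall>k::nat. \<exists>c c' :: real. c > 0 \<and> c' > 0 \<and>
     (\<forall>n::nat. n \<ge> 2 * k \<longrightarrow> (\<forall>w :: nat set \<Rightarrow> real.
        c * hnorm1 k w {1..n} / real n ^ k \<le> (\<Sum>i=0..k. Wvec i k {1..n} w) \<and>
        (\<Sum>i=0..k. Wvec i k {1..n} w) \<le> c' * hnorm1 k w {1..n} / real n ^ k))"
proof
  fix k :: nat
  have C0: "Cl k > 0" using Cl_ge1[of k] by simp
  have D0: "Du k > 0" using Du_ge1[of k] by simp
  show "\<exists>c c' :: real. c > 0 \<and> c' > 0 \<and>
     (\<forall>n::nat. n \<ge> 2 * k \<longrightarrow> (\<forall>w :: nat set \<Rightarrow> real.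
        c * hnorm1 k w {1..n} / real n ^ k \<le> (\<Sum>i=0..k. Wvec i k {1..n} w) \<and>
        (\<Sum>i=0..k. Wvec i k {1..n} w) \<le> c' * hnorm1 k w {1..n} / real n ^ k))"
  proof (intro exI conjI allI impI)
    show "1 / Cl k > 0" using C0 by simp
    show "Du k > 0" by (rule D0)
    fix n :: nat and w :: "nat set \<Rightarrow> real"
    assume kn: "2 * k \<le> n"
    have np: "real n ^ k > 0"
    proof (cases k)
      case 0 then show ?thesis by simp
    next
      case (Suc j) then show ?thesis using kn by simp
    qed
    have L: "hnorm1 k w {1..n} \<le> Cl k * real n ^ k * (\<Sum>i=0..k. Wvec i k {1..n} w)"
      by (rule LB) (use kn in auto)
    have U: "real n ^ k * (\<Sum>i=0..k. Wvec i k {1..n} w) \<le> Du k * hnorm1 k w {1..n}"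
      by (rule UB) (use kn in auto)
    show "1 / Cl k * hnorm1 k w {1..n} / real n ^ k \<le> (\<Sum>i=0..k. Wvec i k {1..n} w)"
      using L C0 np by (simp add: divide_le_eq mult.commute mult.left_commute)
    show "(\<Sum>i=0..k. Wvec i k {1..n} w) \<le> Du k * hnorm1 k w {1..n} / real n ^ k"
      using U np by (simp add: le_divide_eq mult.commute)
  qed
qed

end
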